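(* If $\mathcal G$ is an $n$-dimensional $\mathrm{MD}_{n-2}(n)$-algebra with $\dim\mathcal G^1=2$ and $\mathcal G^1$ contained in the centre of $\mathcal G$, then $n-2$ is divisible by $4$.
   Context: $\mathcal G^1=[\mathcal G,\mathcal G]$. An $\mathrm{MD}_k(n)$-algebra is an $n$-dimensional real solvable Lie algebra all of whose non-trivial coadjoint orbits (for its connected simply connected Lie group; $\dim\Omega_F=\operatorname{rank}(F([x_i,x_j]))$ for a basis $\{x_i\}$, non-trivial iff $F|_{\mathcal G^1}\ne0$) have dimension $k$. *)

theory Defs
  imports "HOL-Analysis.Analysis"
begin

text \<open>An n-dimensional real Lie algebra is modelled as R^n (n = CARD('n)) with a
bracket operation; the standard basis is given by axis i 1.\<close>

definition lie_algebra :: "(real^'n \<Rightarrow> real^'n \<Rightarrow> real^'n) \<Rightarrow> bool" where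
  "lie_algebra br \<longleftrightarrow>
     (\<forall>x. linear (br x)) \<and> (\<forall>y. linear (\<lambda>x. br x y)) \<and>
     (\<forall>x. br x x = 0) \<and>
     (\<forall>x y z. br x (br y z) + br y (br z x) + br z (br x y) = 0)"

definition bracket_span :: "(real^'n \<Rightarrow> real^'n \<Rightarrow> real^'n) \<Rightarrow> (real^'n) set \<Rightarrow> (real^'n) set \<Rightarrow> (real^'n) set" where
  "bracket_span br S T = span {br x y | x y. x \<in> S \<and> y \<in> T}"

fun derived_series :: "(real^'n \<Rightarrow> real^'n \<Rightarrow> real^'n) \<Rightarrow> nat \<Rightarrow> (real^'n) set" where
  "derived_series br 0 = UNIV"
| "derived_series br (Suc k) = bracket_span br (derived_series br k) (derived_series br k)"

definition derived_algebra :: "(real^'n \<Rightarrow> real^'n \<Rightarrow> real^'n) \<Rightarrow> (real^'n) set" where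
  "derived_algebra br = bracket_span br UNIV UNIV"

definition solvable_lie :: "(real^'n \<Rightarrow> real^'n \<Rightarrow> real^'n) \<Rightarrow> bool" where
  "solvable_lie br \<longleftrightarrow> lie_algebra br \<and> (\<exists>k. derived_series br k = {0})"

definition lie_centre :: "(real^'n \<Rightarrow> real^'n \<Rightarrow> real^'n) \<Rightarrow> (real^'n) set" where
  "lie_centre br = {x. \<forall>y. br x y = 0}"

text \<open>Dimension of the coadjoint orbit of the functional F:
  rank of the matrix (F([x_i,x_j])) for the standard basis.\<close>
definition coadj_orbit_dim :: "(real^'n \<Rightarrow> real^'n \<Rightarrow> real^'n) \<Rightarrow> (real^'n \<Rightarrow> real) \<Rightarrow> nat" where
  "coadj_orbit_dim br F = rank (\<chi> i j. F (br (axis i 1) (axis j 1)) :: real^'n^'n)"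

text \<open>MD_k(n)-algebra (n = CARD('n)): real solvable Lie algebra all of whose
  non-trivial coadjoint orbits (F restricted to G^1 nonzero) have dimension k.\<close>
definition MD_algebra :: "nat \<Rightarrow> (real^'n \<Rightarrow> real^'n \<Rightarrow> real^'n) \<Rightarrow> bool" where
  "MD_algebra k br \<longleftrightarrow> solvable_lie br \<and>
     (\<forall>F. linear F \<and> (\<exists>x\<in>derived_algebra br. F x \<noteq> 0) \<longrightarrow> coadj_orbit_dim br F = k)"

end

theory Submission
  imports Defs "HOL-Computational_Algebra.Fundamental_Theorem_Algebra"
begin


lemma rank_nullity_sub:
  fixes f :: "'a::euclidean_space \<Rightarrow> 'b::euclidean_space"
  assumes lf: "linear f" and W: "subspace W"
  shows "dim (W \<inter> {x. f x = 0}) + dim (f ` W) = dim W"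
proof -
  define K where "K = W \<inter> {x. f x = 0}"
  have sK: "subspace K" unfolding K_def
    using W lf by (auto simp: subspace_def linear_add linear_scale linear_0)
  define D where "D = {y \<in> W. \<forall>x\<in>K. orthogonal x y}"
  have dD: "dim D + dim K = dim W" unfolding D_def
    by (rule dim_subspace_orthogonal_to_vectors[OF sK W]) (auto simp: K_def)
  have sD: "subspace D" unfolding D_def
    using W by (auto simp: subspace_def orthogonal_clauses)
  have img: "f ` W = f ` D"
  proof
    show "f ` D \<subseteq> f ` W" by (auto simp: D_def)
  next
    show "f ` W \<subseteq> f ` D"
    proof
      fix v assume "v \<in> f ` W"
      then obtain w where w: "w \<in> W" "v = f w" by auto
      obtain y z where yz: "y \<in> span K" "\<And>u. u \<in> span K \<Longrightarrow> orthogonal z u" "w = y + z"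
        using orthogonal_subspace_decomp_exists[of K w] by metis
      have yK: "y \<in> K" using yz(1) sK by (metis span_eq_iff)
      have "z = w - y" using yz(3) by simp
      hence zW: "z \<in> W" using w yK W by (auto simp: K_def subspace_diff)
      have zD: "z \<in> D"
      proof -
        have "orthogonal x z" if "x \<in> K" for x
          using yz(2)[OF span_base[OF that]] by (simp add: orthogonal_commute)
        thus ?thesis using zW by (simp add: D_def)
      qed
      have "f w = f y + f z" using yz(3) lf by (simp add: linear_add)
      also have "f y = 0" using yK by (simp add: K_def)
      finally show "v \<in> f ` D" using w zD by auto
    qed
  qed
  have inj: "inj_on f (span D)"
  proof -
    have "span D = D" using sD by (metis span_eq_iff)
    moreover have "inj_on f D"
    proof (rule inj_onI)
      fix a b assume ab: "a \<in> D" "b \<in> D" "f a = f b"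
      have "a - b \<in> D" using ab sD by (simp add: subspace_diff)
      moreover have "a - b \<in> K" using ab lf unfolding K_def D_def
        by (auto simp: linear_diff W subspace_diff)
      ultimately have "orthogonal (a-b) (a-b)" by (auto simp: D_def)
      thus "a = b" by (simp add: orthogonal_def)
    qed
    ultimately show ?thesis by (simp only:)
  qed
  have "dim (f ` D) = dim D" by (rule dim_image_eq[OF lf inj])
  thus ?thesis using dD img K_def by simp
qed



definition bil :: "('a::euclidean_space \<Rightarrow> 'a \<Rightarrow> real) \<Rightarrow> bool" where
  "bil w \<longleftrightarrow> (\<forall>x. linear (w x)) \<and> (\<forall>y. linear (\<lambda>x. w x y))"

definition nondeg :: "('a::euclidean_space \<Rightarrow> 'a \<Rightarrow> real) \<Rightarrow> 'a set \<Rightarrow> bool" where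
  "nondeg w W \<longleftrightarrow> (\<forall>x\<in>W. (\<forall>y\<in>W. w x y = 0) \<longrightarrow> x = 0)"

lemma lin_repr:
  fixes phi :: "'a::euclidean_space \<Rightarrow> real"
  assumes "linear phi"
  shows "phi w = (\<Sum>i\<in>Basis. phi i *\<^sub>R i) \<bullet> w"
proof -
  have "phi w = phi (\<Sum>i\<in>Basis. (w \<bullet> i) *\<^sub>R i)" by (simp add: euclidean_representation)
  also have "\<dots> = (\<Sum>i\<in>Basis. (w \<bullet> i) * phi i)"
    using assms by (simp add: linear_sum linear_scale)
  also have "\<dots> = (\<Sum>i\<in>Basis. phi i * (i \<bullet> w))"
    by (rule sum.cong) (simp_all add: inner_commute)
  also have "\<dots> = (\<Sum>i\<in>Basis. phi i *\<^sub>R i) \<bullet> w"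
    by (simp add: inner_sum_left)
  finally show ?thesis .
qed

lemma bil_simps:
  assumes "bil w"
  shows "w (x + y) z = w x z + w y z" "w z (x + y) = w z x + w z y"
    "w (c *\<^sub>R x) z = c * w x z" "w z (c *\<^sub>R x) = c * w z x"
    "w (x - y) z = w x z - w y z" "w z (x - y) = w z x - w z y"
    "w (- x) z = - w x z" "w z (- x) = - w z x"
    "w 0 z = 0" "w z 0 = 0"
proof -
  have l1: "linear (\<lambda>x. w x z)" and l2: "linear (w z)" using assms by (auto simp: bil_def)
  show "w (x + y) z = w x z + w y z" using linear_add[OF l1, of x y] by simp
  show "w z (x + y) = w z x + w z y" using linear_add[OF l2, of x y] by simp
  show "w (c *\<^sub>R x) z = c * w x z" using linear_scale[OF l1, of c x] by simp
  show "w z (c *\<^sub>R x) = c * w z x" using linear_scale[OF l2, of c x] by simp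
  show "w (x - y) z = w x z - w y z" using linear_diff[OF l1, of x y] by simp
  show "w z (x - y) = w z x - w z y" using linear_diff[OF l2, of x y] by simp
  show "w (- x) z = - w x z" using linear_neg[OF l1, of x] by simp
  show "w z (- x) = - w z x" using linear_neg[OF l2, of x] by simp
  show "w 0 z = 0" using linear_0[OF l1] by simp
  show "w z 0 = 0" using linear_0[OF l2] by simp
qed

lemma bil_sum1:
  assumes "bil w" "finite A"
  shows "w (\<Sum>i\<in>A. f i) z = (\<Sum>i\<in>A. w (f i) z)"
  using assms(2) by induct (auto simp: bil_simps[OF assms(1)])

lemma rep:
  fixes w :: "'a::euclidean_space \<Rightarrow> 'a \<Rightarrow> real"
  assumes b: "bil w" and nd: "nondeg w W" and W: "subspace W" and lp: "linear phi"
  shows "\<exists>t\<in>W. \<forall>u\<in>W. w t u = phi u"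
proof -
  define G where "G t = (\<Sum>i\<in>Basis. w t i *\<^sub>R i)" for t
  have Gw: "w t u = G t \<bullet> u" for t u
    unfolding G_def using lin_repr[of "w t" u] b by (simp add: bil_def)
  have lG: "linear G"
    unfolding G_def
    by (rule linearI) (simp_all add: bil_simps[OF b] scaleR_add_left sum.distrib scaleR_sum_right)
  define Wp where "Wp = {y. \<forall>x\<in>W. orthogonal x y}"
  have sWp: "subspace Wp" unfolding Wp_def
    by (auto simp: subspace_def orthogonal_clauses)
  have dWp: "dim Wp + dim W = DIM('a)"
    using dim_subspace_orthogonal_to_vectors[OF W subspace_UNIV] by (simp add: Wp_def)
  have injG: "inj_on G (span W)"
  proof -
    have "inj_on G W"
    proof (rule inj_onI)
      fix a b assume ab: "a \<in> W" "b \<in> W" "G a = G b"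
      have "G (a - b) = 0" using ab lG by (simp add: linear_diff)
      hence "\<forall>u\<in>W. w (a - b) u = 0" using Gw by simp
      moreover have "a - b \<in> W" using ab W by (simp add: subspace_diff)
      ultimately have "a - b = 0" using nd unfolding nondeg_def by blast
      thus "a = b" by simp
    qed
    moreover have "span W = W" using W by (metis span_eq_iff)
    ultimately show ?thesis by (simp only:)
  qed
  have dGW: "dim (G ` W) = dim W" by (rule dim_image_eq[OF lG injG])
  have sGW: "subspace (G ` W)" using W lG by (simp add: linear_subspace_image)
  have int0: "G ` W \<inter> Wp = {0}"
  proof
    show "G ` W \<inter> Wp \<subseteq> {0}"
    proof
      fix v assume v: "v \<in> G ` W \<inter> Wp"
      then obtain t where t: "t \<in> W" "v = G t" by auto
      have "\<forall>u\<in>W. w t u = 0" using v t Gw unfolding Wp_def orthogonal_def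
        by (simp add: inner_commute)
      hence "t = 0" using nd t unfolding nondeg_def by blast
      thus "v \<in> {0}" using t lG by (simp add: linear_0)
    qed
  next
    show "{0} \<subseteq> G ` W \<inter> Wp" using W sWp lG
      by (auto simp: subspace_0 linear_0 intro!: image_eqI[where x=0])
  qed
  define Sm where "Sm = {x + y |x y. x \<in> G ` W \<and> y \<in> Wp}"
  have "dim Sm + dim (G ` W \<inter> Wp) = dim (G ` W) + dim Wp"
    unfolding Sm_def by (rule dim_sums_Int[OF sGW sWp])
  hence "dim Sm = DIM('a)" using int0 dGW dWp by simp
  hence "span Sm = UNIV" by (simp add: dim_eq_full)
  moreover have "subspace Sm" unfolding Sm_def by (rule subspace_sums[OF sGW sWp])
  ultimately have "Sm = UNIV" by (metis span_eq_iff)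
  then obtain x y where xy: "x \<in> G ` W" "y \<in> Wp" "(\<Sum>i\<in>Basis. phi i *\<^sub>R i) = x + y"
    unfolding Sm_def by blast
  then obtain t where t: "t \<in> W" "x = G t" by auto
  have "w t u = phi u" if "u \<in> W" for u
  proof -
    have "phi u = (x + y) \<bullet> u" using lin_repr[OF lp, of u] xy(3) by simp
    also have "\<dots> = G t \<bullet> u" using xy(2) that t(2) unfolding Wp_def orthogonal_def
      by (simp add: inner_add_left inner_add_right inner_commute)
    finally show ?thesis using Gw by simp
  qed
  thus ?thesis using t by blast
qed



definition papp :: "('a::real_vector \<Rightarrow> 'a) \<Rightarrow> real poly \<Rightarrow> 'a \<Rightarrow> 'a" where
  "papp T p v = foldr (\<lambda>c acc. c *\<^sub>R v + T acc) (coeffs p) 0"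

lemma papp_0[simp]: "papp T 0 v = 0" by (simp add: papp_def)

lemma papp_pCons:
  assumes "linear T"
  shows "papp T (pCons a p) v = a *\<^sub>R v + T (papp T p v)"
proof (cases "p = 0 \<and> a = 0")
  case True thus ?thesis using assms by (simp add: linear_0)
next
  case False
  hence "coeffs (pCons a p) = a # coeffs p" by (auto simp: cCons_def)
  thus ?thesis by (simp add: papp_def)
qed

lemma papp_add:
  assumes "linear T"
  shows "papp T (p + q) v = papp T p v + papp T q v"
proof (induction p q rule: poly_induct2)
  case 0 thus ?case by simp
next
  case (pCons a p b q)
  thus ?case using assms by (simp add: papp_pCons linear_add scaleR_add_left algebra_simps)
qed

lemma papp_smult:
  assumes "linear T"
  shows "papp T (smult c p) v = c *\<^sub>R papp T p v"
proof (induction p)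
  case 0 thus ?case by simp
next
  case (pCons a p)
  thus ?case using assms by (simp add: papp_pCons linear_scale scaleR_add_right)
qed

lemma papp_mult:
  assumes "linear T"
  shows "papp T (p * q) v = papp T p (papp T q v)"
proof (induction p)
  case 0 thus ?case by simp
next
  case (pCons a p)
  have "papp T (pCons a p * q) v = papp T (smult a q + pCons 0 (p * q)) v" by simp
  also have "\<dots> = a *\<^sub>R papp T q v + T (papp T (p * q) v)"
    using assms by (simp add: papp_add papp_smult papp_pCons)
  also have "\<dots> = papp T (pCons a p) (papp T q v)" using pCons assms by (simp add: papp_pCons)
  finally show ?case .
qed

lemma papp_diff:
  assumes "linear T"
  shows "papp T (p - q) v = papp T p v - papp T q v"
  using papp_add[OF assms, of "p - q" q v] by simp

lemma papp_const: "linear T \<Longrightarrow> papp T [:c:] v = c *\<^sub>R v"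
  by (simp add: papp_pCons linear_0)

lemma papp_monom:
  assumes "linear T"
  shows "papp T (monom c i) v = c *\<^sub>R (T ^^ i) v"
proof (induction i)
  case 0 thus ?case using assms by (simp add: monom_0 papp_const)
next
  case (Suc i) thus ?case using assms by (simp add: monom_Suc papp_pCons linear_scale)
qed

lemma papp_sum:
  assumes "linear T" "finite A"
  shows "papp T (\<Sum>i\<in>A. f i) v = (\<Sum>i\<in>A. papp T (f i) v)"
  using assms(2) by induct (simp_all add: papp_add[OF assms(1)])

lemma papp_in:
  assumes "linear T" "subspace W" "\<And>x. x \<in> W \<Longrightarrow> T x \<in> W" "v \<in> W"
  shows "papp T p v \<in> W"
proof (induction p)
  case 0 thus ?case using assms by (simp add: subspace_0)
next
  case (pCons a p) thus ?case using assms
    by (simp add: papp_pCons subspace_add subspace_scale)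
qed

definition E :: "real poly \<Rightarrow> complex \<Rightarrow> complex" where
  "E p z = poly (map_poly complex_of_real p) z"

lemma E_pCons: "E (pCons a p) z = of_real a + z * E p z"
  by (simp add: E_def map_poly_pCons)

lemma E_0[simp]: "E 0 z = 0" by (simp add: E_def)

lemma E_add: "E (p + q) z = E p z + E q z"
  by (induction p q rule: poly_induct2) (simp_all add: E_pCons algebra_simps)

lemma E_smult: "E (smult c p) z = of_real c * E p z"
  by (induction p) (simp_all add: E_pCons algebra_simps)

lemma E_mult: "E (p * q) z = E p z * E q z"
  by (induction p) (simp_all add: E_pCons E_add E_smult algebra_simps)

lemma E_real: "E p (of_real x) = of_real (poly p x)"
  by (induction p) (simp_all add: E_pCons)

lemma quad_factor:
  fixes f :: "real poly"
  assumes "degree f > 0"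
  shows "\<exists>g q. f = g * q \<and> ((\<exists>x. g = [:-x, 1:]) \<or> (\<exists>c0 c1. g = [:c0, c1, 1:]))"
proof -
  have "degree (map_poly complex_of_real f) = degree f" by (simp add: degree_map_poly)
  hence "\<not> constant (poly (map_poly complex_of_real f))" using assms by (simp add: constant_degree)
  then obtain z where z: "E f z = 0" using fundamental_theorem_of_algebra unfolding E_def by blast
  show ?thesis
  proof (cases "Im z = 0")
    case True
    hence "z = of_real (Re z)" by (simp add: complex_eq_iff)
    hence "poly f (Re z) = 0" using z E_real[of f "Re z"] by simp
    then obtain q where "f = [:- Re z, 1:] * q" using poly_eq_0_iff_dvd by (metis dvdE)
    thus ?thesis by blast
  next
    case False
    define g where "g = [:(Re z)^2 + (Im z)^2, -2 * Re z, 1:]"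
    have Eg: "E g z = 0" unfolding g_def
      by (simp add: E_pCons complex_eq_iff power2_eq_square algebra_simps)
    define r where "r = f mod g"
    have g0: "g \<noteq> 0" by (simp add: g_def)
    have dg: "degree g = 2" by (simp add: g_def)
    have "f div g * g + r = f" unfolding r_def by simp
    hence "E (f div g) z * E g z + E r z = E f z" by (metis E_add E_mult)
    hence Er: "E r z = 0" using Eg z by simp
    have "r = 0 \<or> degree r < 2" using degree_mod_less[OF g0, of f] dg r_def by simp
    hence "degree r \<le> 1" by auto
    hence req: "r = [:coeff r 0, coeff r 1:]"
      by (intro poly_eqI) (auto simp: coeff_pCons coeff_eq_0 split: nat.splits)
    have "E [:coeff r 0, coeff r 1:] z = of_real (coeff r 0) + z * of_real (coeff r 1)"
      by (simp add: E_pCons)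
    hence "of_real (coeff r 0) + z * of_real (coeff r 1) = 0" using Er req by simp
    hence "coeff r 0 = 0 \<and> coeff r 1 = 0" using False by (auto simp: complex_eq_iff)
    hence "r = 0" using req by simp
    hence "g dvd f" unfolding r_def by (simp add: mod_eq_0_iff_dvd)
    then obtain q where "f = g * q" by (metis dvdE)
    thus ?thesis unfolding g_def by blast
  qed
qed



lemma quad_exists:
  fixes T :: "'a::euclidean_space \<Rightarrow> 'a"
  assumes lT: "linear T" and W: "subspace W" and inv: "\<And>x. x \<in> W \<Longrightarrow> T x \<in> W"
    and noeig: "\<And>v c. v \<in> W \<Longrightarrow> T v = c *\<^sub>R v \<Longrightarrow> v = 0"
  shows "f \<noteq> 0 \<Longrightarrow> u \<in> W \<Longrightarrow> u \<noteq> 0 \<Longrightarrow> papp T f u = 0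
     \<Longrightarrow> \<exists>y\<in>W. y \<noteq> 0 \<and> (\<exists>p q. T (T y) = p *\<^sub>R T y + q *\<^sub>R y)"
proof (induction "degree f" arbitrary: f u rule: less_induct)
  case less
  show ?case
  proof (cases "degree f = 0")
    case True
    then obtain c where "f = [:c:]" by (metis degree_eq_zeroE)
    hence "papp T f u = c *\<^sub>R u" "c \<noteq> 0" using less.prems lT by (auto simp: papp_const)
    thus ?thesis using less.prems by simp
  next
    case False
    then obtain g q where gq: "f = g * q"
      and gform: "(\<exists>x. g = [:-x, 1:]) \<or> (\<exists>c0 c1. g = [:c0, c1, 1:])"
      using quad_factor[of f] False by blast
    have g0: "g \<noteq> 0" using gform by auto
    have dg: "degree g \<ge> 1" using gform by auto
    have q0: "q \<noteq> 0" using gq less.prems by auto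
    have dq: "degree q < degree f" using gq g0 q0 dg by (simp add: degree_mult_eq)
    define y where "y = papp T q u"
    have yW: "y \<in> W" unfolding y_def by (rule papp_in[OF lT W inv less.prems(2)])
    have py: "papp T g y = 0" using less.prems(4) gq lT by (simp add: papp_mult y_def)
    show ?thesis
    proof (cases "y = 0")
      case True
      thus ?thesis using less.hyps[OF dq q0 less.prems(2,3)] y_def by simp
    next
      case False
      show ?thesis using gform
      proof
        assume "\<exists>x. g = [:-x, 1:]"
        then obtain x where "g = [:-x, 1:]" by blast
        hence "- x *\<^sub>R y + T y = 0" using py lT by (simp add: papp_pCons linear_0)
        hence "T y = x *\<^sub>R y" by (simp add: algebra_simps add_eq_0_iff)
        hence "y = 0" using noeig yW by blast
        thus ?thesis using False by simp
      next
        assume "\<exists>c0 c1. g = [:c0, c1, 1:]"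
        then obtain c0 c1 where "g = [:c0, c1, 1:]" by blast
        hence "c0 *\<^sub>R y + T (c1 *\<^sub>R y + T y) = 0" using py lT by (simp add: papp_pCons linear_0)
        hence "c0 *\<^sub>R y + c1 *\<^sub>R T y + T (T y) = 0" using lT by (simp add: linear_add linear_scale add.assoc)
        hence "T (T y) = (- c1) *\<^sub>R T y + (- c0) *\<^sub>R y"
          by (simp add: algebra_simps eq_neg_iff_add_eq_0)
        thus ?thesis using False yW by blast
      qed
    qed
  qed
qed

lemma ann_exists:
  fixes T :: "'a::euclidean_space \<Rightarrow> 'a"
  assumes lT: "linear T" and W: "subspace W" and inv: "\<And>x. x \<in> W \<Longrightarrow> T x \<in> W"
    and v: "v \<in> W"
  shows "\<exists>f. f \<noteq> 0 \<and> papp T f v = 0"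
proof -
  define d where "d = dim W"
  have Tin: "(T ^^ i) v \<in> W" for i by (induction i) (simp_all add: v inv)
  show ?thesis
  proof (cases "inj_on (\<lambda>i. (T ^^ i) v) {..d}")
    case False
    then obtain i j where ij: "i \<le> d" "j \<le> d" "i \<noteq> j" "(T ^^ i) v = (T ^^ j) v"
      unfolding inj_on_def by auto
    define f where "f = monom (1::real) i - monom 1 j"
    have "coeff f i = 1" using ij by (simp add: f_def coeff_monom)
    hence "f \<noteq> 0" by auto
    moreover have "papp T f v = 0" using ij lT by (simp add: f_def papp_diff papp_monom)
    ultimately show ?thesis by blast
  next
    case True
    define S where "S = (\<lambda>i. (T ^^ i) v) ` {..d}"
    have cS: "card S = Suc d" using True by (simp add: S_def card_image)
    have SW: "S \<subseteq> W" using Tin by (auto simp: S_def)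
    have "dependent S"
    proof (rule ccontr)
      assume "\<not> dependent S"
      hence "card S \<le> dim W" using independent_card_le_dim[OF SW] by simp
      thus False using cS d_def by simp
    qed
    then obtain c where c: "\<exists>s\<in>S. c s \<noteq> 0" "(\<Sum>s\<in>S. c s *\<^sub>R s) = 0"
      using dependent_finite[of S] by (auto simp: S_def)
    define f where "f = (\<Sum>i\<le>d. monom (c ((T ^^ i) v)) i)"
    have pf: "papp T f v = (\<Sum>i\<le>d. c ((T ^^ i) v) *\<^sub>R (T ^^ i) v)"
      unfolding f_def using lT by (simp add: papp_sum papp_monom)
    also have "\<dots> = (\<Sum>s\<in>S. c s *\<^sub>R s)"
      unfolding S_def using sum.reindex[OF True, of "\<lambda>s. c s *\<^sub>R s"] by simp
    finally have "papp T f v = 0" using c by simp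
    moreover have "f \<noteq> 0"
    proof -
      obtain j where j: "j \<le> d" "c ((T ^^ j) v) \<noteq> 0" using c(1) by (auto simp: S_def)
      have "coeff f j = (\<Sum>i\<le>d. coeff (monom (c ((T ^^ i) v)) i) j)" by (simp add: f_def coeff_sum)
      also have "\<dots> = (\<Sum>i\<le>d. if i = j then c ((T ^^ i) v) else 0)"
        by (rule sum.cong) (auto simp: coeff_monom)
      also have "\<dots> = c ((T ^^ j) v)" using j by simp
      finally show ?thesis using j by auto
    qed
    ultimately show ?thesis by blast
  qed
qed



definition good :: "'a::euclidean_space set \<Rightarrow> ('a \<Rightarrow> 'a \<Rightarrow> real) \<Rightarrow> ('a \<Rightarrow> 'a \<Rightarrow> real) \<Rightarrow> bool" where
  "good W w1 w2 \<longleftrightarrow> subspace W \<and> bil w1 \<and> bil w2 \<and> (\<forall>x. w1 x x = 0) \<and> (\<forall>x. w2 x x = 0) \<and>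
     (\<forall>a b. a \<noteq> 0 \<or> b \<noteq> 0 \<longrightarrow> nondeg (\<lambda>x y. a * w1 x y + b * w2 x y) W)"

lemma antisym_bil:
  assumes "bil w" "\<forall>x. w x x = 0"
  shows "w x y = - w y x"
proof -
  have "w (x + y) (x + y) = 0" using assms(2) by simp
  hence "w x x + w x y + (w y x + w y y) = 0" by (simp add: bil_simps[OF assms(1)])
  thus ?thesis using assms(2) by simp
qed

lemma bil_lin2:
  assumes "bil w"
  shows "w (c *\<^sub>R x + d *\<^sub>R y) z = c * w x z + d * w y z"
  by (simp add: bil_simps[OF assms])

lemma solve2a:
  fixes a b p q al be D :: real
  assumes "D \<noteq> 0" "D = a * (a + b * p) - b^2 * q"
  shows "a * ((al * (a + b * p) - b * q * be) / D) + b * q * ((a * be - b * al) / D) = al"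
proof -
  have "a * (al * (a + b * p) - b * q * be) + b * q * (a * be - b * al) = al * D"
    unfolding assms(2) by (simp add: algebra_simps power2_eq_square)
  thus ?thesis using assms(1) by (simp add: field_simps)
qed

lemma solve2b:
  fixes a b p q al be D :: real
  assumes "D \<noteq> 0" "D = a * (a + b * p) - b^2 * q"
  shows "b * ((al * (a + b * p) - b * q * be) / D) + (a + b * p) * ((a * be - b * al) / D) = be"
proof -
  have "b * (al * (a + b * p) - b * q * be) + (a + b * p) * (a * be - b * al) = be * D"
    unfolding assms(2) by (simp add: algebra_simps power2_eq_square)
  thus ?thesis using assms(1) by (simp add: field_simps)
qed

lemma construct_T:
  fixes w1 w2 :: "'a::euclidean_space \<Rightarrow> 'a \<Rightarrow> real"
  assumes W: "subspace W" and b1: "bil w1" and b2: "bil w2" and nd: "nondeg w1 W"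
  shows "\<exists>T. linear T \<and> (\<forall>v\<in>W. T v \<in> W \<and> (\<forall>u\<in>W. w1 (T v) u = w2 v u))"
proof -
  have ex: "\<exists>t. t \<in> W \<and> (\<forall>u\<in>W. w1 t u = w2 v u)" for v
  proof -
    have "linear (w2 v)" using b2 unfolding bil_def by blast
    from rep[OF b1 nd W this] show ?thesis by blast
  qed
  obtain B where B: "B \<subseteq> W" "independent B" "W \<subseteq> span B" "card B = dim W"
    by (rule basis_exists[of W])
  define f where "f v = (SOME t. t \<in> W \<and> (\<forall>u\<in>W. w1 t u = w2 v u))" for v
  have fP: "f v \<in> W \<and> (\<forall>u\<in>W. w1 (f v) u = w2 v u)" for v
    unfolding f_def by (rule someI_ex[OF ex])
  obtain T where T: "linear T" "\<forall>x\<in>B. T x = f x"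
    using linear_independent_extend[OF B(2), of f] by blast
  define P where "P v \<longleftrightarrow> T v \<in> W \<and> (\<forall>u\<in>W. w1 (T v) u = w2 v u)" for v
  have sP: "subspace (Collect P)"
    unfolding subspace_def
  proof (intro conjI ballI allI)
    show "0 \<in> Collect P" using T(1) W by (simp add: P_def linear_0 subspace_0 bil_simps[OF b1] bil_simps[OF b2])
  next
    fix x y assume "x \<in> Collect P" "y \<in> Collect P"
    hence "P x" "P y" by auto
    thus "x + y \<in> Collect P" using T(1) W
      by (simp add: P_def linear_add subspace_add bil_simps[OF b1] bil_simps[OF b2])
  next
    fix c x assume "x \<in> Collect P"
    hence "P x" by auto
    thus "c *\<^sub>R x \<in> Collect P" using T(1) W
      by (simp add: P_def linear_scale subspace_scale bil_simps[OF b1] bil_simps[OF b2])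
  qed
  have "P v" if "v \<in> W" for v
  proof (rule span_induct[of v B P])
    show "v \<in> span B" using that B(3) by auto
    show "subspace (Collect P)" by (rule sP)
    show "P x" if "x \<in> B" for x using that T(2) fP[of x] by (simp add: P_def)
  qed
  hence "\<forall>v\<in>W. T v \<in> W \<and> (\<forall>u\<in>W. w1 (T v) u = w2 v u)" unfolding P_def by blast
  thus ?thesis using T(1) by blast
qed



lemma step:
  fixes w1 w2 :: "'a::euclidean_space \<Rightarrow> 'a \<Rightarrow> real"
  assumes g: "good W w1 w2" and Wne: "W \<noteq> {0}"
  shows "\<exists>C. good C w1 w2 \<and> dim C + 4 = dim W"
proof -
  have W: "subspace W" and b1: "bil w1" and b2: "bil w2"
    and a1: "\<forall>x. w1 x x = 0" and a2: "\<forall>x. w2 x x = 0"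
    using g by (auto simp: good_def)
  have ndc: "v = 0" if "a \<noteq> 0 \<or> b \<noteq> 0" "v \<in> W" "\<And>u. u \<in> W \<Longrightarrow> a * w1 v u + b * w2 v u = 0"
    for a b v
  proof -
    have "nondeg (\<lambda>x y. a * w1 x y + b * w2 x y) W" using g that(1) by (auto simp: good_def)
    thus ?thesis using that(2,3) unfolding nondeg_def by blast
  qed
  have nd1: "nondeg w1 W" unfolding nondeg_def using ndc[of 1 0] by auto
  note s1 = bil_simps[OF b1] and s2 = bil_simps[OF b2]
  have as1: "w1 x y = - w1 y x" for x y by (rule antisym_bil[OF b1 a1])
  have as2: "w2 x y = - w2 y x" for x y by (rule antisym_bil[OF b2 a2])
  obtain T where lT: "linear T" and TW: "\<And>v. v \<in> W \<Longrightarrow> T v \<in> W"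
    and Tw: "\<And>v u. v \<in> W \<Longrightarrow> u \<in> W \<Longrightarrow> w1 (T v) u = w2 v u"
    using construct_T[OF W b1 b2 nd1] by blast
  have noeig: "v = 0" if "v \<in> W" "T v = c *\<^sub>R v" for v c
  proof (rule ndc[of "- c" 1 v])
    show "- c \<noteq> 0 \<or> (1::real) \<noteq> 0" by simp
    show "v \<in> W" by fact
    fix u assume "u \<in> W"
    hence "w2 v u = c * w1 v u" using Tw[OF that(1), of u] that(2) s1 by simp
    thus "- c * w1 v u + 1 * w2 v u = 0" by simp
  qed
  obtain v0 where v0: "v0 \<in> W" "v0 \<noteq> 0" using Wne W subspace_0 by blast
  obtain fp where fp: "fp \<noteq> 0" "papp T fp v0 = 0" using ann_exists[OF lT W TW v0(1)] by blast
  obtain x p q where x: "x \<in> W" "x \<noteq> 0" and Tq: "T (T x) = p *\<^sub>R T x + q *\<^sub>R x"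
  proof -
    have "\<exists>y\<in>W. y \<noteq> 0 \<and> (\<exists>p q. T (T y) = p *\<^sub>R T y + q *\<^sub>R y)"
      by (rule quad_exists[of T W fp v0]) (use lT W TW noeig fp v0 in auto)
    thus ?thesis using that by blast
  qed
  define y where "y = T x"
  have yW: "y \<in> W" using TW x by (simp add: y_def)
  have wx: "w2 x u = w1 y u" if "u \<in> W" for u using Tw[OF x(1) that] by (simp add: y_def)
  have wy: "w2 y u = p * w1 y u + q * w1 x u" if "u \<in> W" for u
    using Tw[OF yW that] Tq by (simp add: y_def s1)
  have indep: "al = 0 \<and> be = 0" if "al *\<^sub>R x + be *\<^sub>R y = 0" for al be
  proof (cases "be = 0")
    case True thus ?thesis using that x(2) by simp
  next
    case False
    have e1: "be *\<^sub>R y = (- al) *\<^sub>R x" using that by (simp add: add_eq_0_iff)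
    have "y = inverse be *\<^sub>R (be *\<^sub>R y)" using False by simp
    also have "\<dots> = (- al / be) *\<^sub>R x" using e1 by (simp add: divide_inverse mult.commute)
    finally have "y = (- al / be) *\<^sub>R x" .
    hence "x = 0" using noeig[OF x(1), of "- al / be"] by (simp add: y_def)
    thus ?thesis using x(2) by simp
  qed
  have xy0: "w1 x y = 0" using as1[of x y] wx[OF x(1)] a2 by simp
  have xx0: "w1 x x = 0" "w1 y y = 0" using a1 by auto
  have yx0: "w1 y x = 0" using xy0 as1[of y x] by simp
  define h where "h w = (w1 x w, w1 y w)" for w
  have lh: "linear h" unfolding h_def by (rule linearI) (simp_all add: s1)
  have sh: "subspace (h ` W)" using W lh by (simp add: linear_subspace_image)
  have hsurj: "h ` W = UNIV"
  proof (rule ccontr)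
    assume ne: "h ` W \<noteq> UNIV"
    have "span (h ` W) \<noteq> UNIV" using sh ne by (metis span_eq_iff)
    hence "dim (h ` W) \<noteq> DIM(real \<times> real)" using dim_eq_full by blast
    hence "dim (h ` W) < DIM(real \<times> real)" using dim_subset_UNIV[of "h ` W"] by linarith
    then obtain z where z: "z \<noteq> 0" "\<And>v. v \<in> span (h ` W) \<Longrightarrow> orthogonal z v"
      using orthogonal_to_subspace_exists by blast
    obtain al be where zab: "z = (al, be)" by (cases z)
    have "al * w1 x u + be * w1 y u = 0" if "u \<in> W" for u
    proof -
      have "h u \<in> span (h ` W)" using that by (simp add: span_base)
      from z(2)[OF this] show ?thesis using zab by (simp add: h_def orthogonal_def)
    qed
    hence "w1 (al *\<^sub>R x + be *\<^sub>R y) u = 0" if "u \<in> W" for u using that by (simp add: s1)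
    hence "al *\<^sub>R x + be *\<^sub>R y = 0"
      using nd1 W x(1) yW unfolding nondeg_def by (meson subspace_add subspace_scale)
    hence "al = 0 \<and> be = 0" by (rule indep)
    thus False using z(1) zab by (simp add: zero_prod_def)
  qed
  obtain e where e: "e \<in> W" "w1 x e = 1" "w1 y e = 0"
    using hsurj by (metis (no_types, lifting) Pair_inject UNIV_I h_def imageE)
  obtain f where f: "f \<in> W" "w1 x f = 0" "w1 y f = 1"
    using hsurj by (metis (no_types, lifting) Pair_inject UNIV_I h_def imageE)
  define P where "P = W \<inter> {w. h w = 0}"
  have sP: "subspace P" unfolding P_def using W lh
    by (auto simp: subspace_def linear_add linear_scale linear_0)
  have dP: "dim P + 2 = dim W"
    using rank_nullity_sub[OF lh W] hsurj by (simp add: P_def)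
  have inP: "w \<in> P \<longleftrightarrow> w \<in> W \<and> w1 x w = 0 \<and> w1 y w = 0" for w
    by (simp add: P_def h_def zero_prod_def)
  define h' where "h' w = (w1 e w, w1 f w)" for w
  have lh': "linear h'" unfolding h'_def by (rule linearI) (simp_all add: s1)
  have ex1: "w1 e x = -1" "w1 e y = 0" "w1 f x = 0" "w1 f y = -1"
    using e f as1 by (metis neg_equal_zero equation_minus_iff)+
  have xP: "x \<in> P" "y \<in> P" using x(1) yW xx0 xy0 yx0 by (auto simp: inP)
  have h'surj: "h' ` P = UNIV"
  proof -
    have "h' ((- a) *\<^sub>R x + (- b) *\<^sub>R y) = (a, b)" for a b
      by (simp add: h'_def s1 ex1)
    moreover have "(- a) *\<^sub>R x + (- b) *\<^sub>R y \<in> P" for a b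
      using sP xP by (intro subspace_add subspace_scale)
    ultimately show ?thesis by (metis UNIV_eq_I imageI prod.exhaust)
  qed
  define C where "C = P \<inter> {w. h' w = 0}"
  have sC: "subspace C" unfolding C_def using sP lh'
    by (auto simp: subspace_def linear_add linear_scale linear_0)
  have dC: "dim C + 2 = dim P"
    using rank_nullity_sub[OF lh' sP] h'surj by (simp add: C_def)
  have inC: "w \<in> C \<longleftrightarrow> w \<in> P \<and> w1 e w = 0 \<and> w1 f w = 0" for w
    by (simp add: C_def h'_def zero_prod_def)
  have ndC: "nondeg (\<lambda>x y. a * w1 x y + b * w2 x y) C" if ab: "a \<noteq> 0 \<or> b \<noteq> 0" for a b
  proof -
    have omlin: "a * w1 (g *\<^sub>R x + d *\<^sub>R y) w + b * w2 (g *\<^sub>R x + d *\<^sub>R y) w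
        = (a*g + b*q*d) * w1 x w + (b*g + (a+b*p)*d) * w1 y w" if "w \<in> W" for g d w
      by (simp add: s1 s2 wx[OF that] wy[OF that] algebra_simps)
    define D where "D = a * (a + b * p) - b^2 * q"
    have D0: "D \<noteq> 0"
    proof
      assume D: "D = 0"
      obtain g d where gd: "g \<noteq> 0 \<or> d \<noteq> 0" "a*g + b*q*d = 0" "b*g + (a+b*p)*d = 0"
      proof (cases "a = 0")
        case False
        show ?thesis
          by (rule that[of "b*q" "-a"]) (use False D in \<open>auto simp: D_def algebra_simps power2_eq_square\<close>)
      next
        case True
        hence "b \<noteq> 0" using ab by simp
        show ?thesis
          by (rule that[of "a + b*p" "-b"]) (use True D \<open>b \<noteq> 0\<close> in \<open>auto simp: D_def algebra_simps power2_eq_square\<close>)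
      qed
      have "g *\<^sub>R x + d *\<^sub>R y = 0"
      proof (rule ndc[OF ab])
        show "g *\<^sub>R x + d *\<^sub>R y \<in> W" using W x(1) yW by (intro subspace_add subspace_scale)
        fix u assume "u \<in> W"
        thus "a * w1 (g *\<^sub>R x + d *\<^sub>R y) u + b * w2 (g *\<^sub>R x + d *\<^sub>R y) u = 0"
          using omlin gd by simp
      qed
      hence "g = 0 \<and> d = 0" by (rule indep)
      thus False using gd(1) by simp
    qed
    show ?thesis unfolding nondeg_def
    proof (intro ballI impI)
      fix u assume uC: "u \<in> C" and H: "\<forall>c\<in>C. a * w1 u c + b * w2 u c = 0"
      have uW: "u \<in> W" and ux: "w1 x u = 0" and uy: "w1 y u = 0" and ue: "w1 e u = 0" and uf: "w1 f u = 0"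
        using uC by (auto simp: inC inP)
      have w2xu: "w2 x u = 0" using wx[OF uW] uy by simp
      have w2yu: "w2 y u = 0" using wy[OF uW] uy ux by simp
      have oux: "a * w1 u x + b * w2 u x = 0" using as1[of u x] as2[of u x] ux w2xu by simp
      have ouy: "a * w1 u y + b * w2 u y = 0" using as1[of u y] as2[of u y] uy w2yu by simp
      have oP: "a * w1 u v + b * w2 u v = 0" if vP: "v \<in> P" for v
      proof -
        define c where "c = v + (w1 e v) *\<^sub>R x + (w1 f v) *\<^sub>R y"
        have "c \<in> P" unfolding c_def using sP vP xP by (intro subspace_add subspace_scale)
        moreover have "w1 e c = 0" "w1 f c = 0" unfolding c_def by (simp_all add: s1 ex1)
        ultimately have "c \<in> C" by (simp add: inC)
        hence "a * w1 u c + b * w2 u c = 0" using H by blast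
        moreover have "a * w1 u c + b * w2 u c = (a * w1 u v + b * w2 u v)
            + w1 e v * (a * w1 u x + b * w2 u x) + w1 f v * (a * w1 u y + b * w2 u y)"
          unfolding c_def by (simp add: s1 s2 algebra_simps)
        ultimately show ?thesis using oux ouy by simp
      qed
      define al where "al = a * w1 u e + b * w2 u e"
      define be where "be = a * w1 u f + b * w2 u f"
      have oW: "a * w1 u w + b * w2 u w = al * w1 x w + be * w1 y w" if wW: "w \<in> W" for w
      proof -
        define pv where "pv = w - (w1 x w) *\<^sub>R e - (w1 y w) *\<^sub>R f"
        have "pv \<in> W" unfolding pv_def using W wW e(1) f(1) by (intro subspace_diff subspace_scale)
        moreover have "w1 x pv = 0" "w1 y pv = 0" unfolding pv_def using e f by (simp_all add: s1)
        ultimately have "pv \<in> P" by (simp add: inP)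
        hence "a * w1 u pv + b * w2 u pv = 0" by (rule oP)
        moreover have "a * w1 u pv + b * w2 u pv = (a * w1 u w + b * w2 u w)
            - w1 x w * al - w1 y w * be"
          unfolding pv_def al_def be_def by (simp add: s1 s2 algebra_simps)
        ultimately show ?thesis by (simp add: algebra_simps)
      qed
      define g where "g = (al * (a + b * p) - b * q * be) / D"
      define d where "d = (a * be - b * al) / D"
      have gd1: "a*g + b*q*d = al" unfolding g_def d_def by (rule solve2a[OF D0 D_def])
      have gd2: "b*g + (a+b*p)*d = be" unfolding g_def d_def by (rule solve2b[OF D0 D_def])
      define s where "s = g *\<^sub>R x + d *\<^sub>R y"
      have sW: "s \<in> W" unfolding s_def using W x(1) yW by (intro subspace_add subspace_scale)
      have "u - s = 0"
      proof (rule ndc[OF ab])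
        show "u - s \<in> W" using uW sW W by (simp add: subspace_diff)
        fix w assume wW: "w \<in> W"
        have "a * w1 (u - s) w + b * w2 (u - s) w
            = (a * w1 u w + b * w2 u w) - (a * w1 s w + b * w2 s w)"
          by (simp add: s1 s2 algebra_simps)
        also have "\<dots> = 0" using oW[OF wW] omlin[OF wW, of g d] gd1 gd2 by (simp add: s_def)
        finally show "a * w1 (u - s) w + b * w2 (u - s) w = 0" .
      qed
      hence us: "u = g *\<^sub>R x + d *\<^sub>R y" by (simp add: s_def)
      have "w1 e u = - g" "w1 f u = - d" unfolding us by (simp_all add: s1 ex1)
      hence "g = 0" "d = 0" using ue uf by simp_all
      thus "u = 0" using us by simp
    qed
  qed
  have "good C w1 w2" unfolding good_def using sC b1 b2 a1 a2 ndC by blast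
  moreover have "dim C + 4 = dim W" using dP dC by simp
  ultimately show ?thesis by blast
qed



lemma good_dvd: "good W w1 w2 \<Longrightarrow> 4 dvd dim W"
proof (induction "dim W" arbitrary: W rule: less_induct)
  case less
  show ?case
  proof (cases "W = {0}")
    case True thus ?thesis by simp
  next
    case False
    then obtain C where C: "good C w1 w2" "dim C + 4 = dim W" using step[OF less.prems] by blast
    have "4 dvd dim C" using less.hyps[of C] C by simp
    thus ?thesis using C(2) by (metis dvd_add dvd_refl)
  qed
qed

lemma lin_comp_inner:
  assumes "linear g"
  shows "linear (\<lambda>y. c \<bullet> g y)"
  by (rule linearI) (simp_all add: linear_add[OF assms] linear_scale[OF assms] inner_add_right)

theorem corollary4p6:
  fixes br :: "real^'n \<Rightarrow> real^'n \<Rightarrow> real^'n"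
  assumes "MD_algebra (CARD('n) - 2) br"
    and "dim (derived_algebra br) = 2"
    and "derived_algebra br \<subseteq> lie_centre br"
  shows "4 dvd (CARD('n) - 2)"
proof -
  define Z where "Z = derived_algebra br"
  have lie: "lie_algebra br" using assms(1) by (simp add: MD_algebra_def solvable_lie_def)
  have L1: "linear (br x)" for x using lie by (simp add: lie_algebra_def)
  have L2: "linear (\<lambda>x. br x y)" for y using lie by (simp add: lie_algebra_def)
  have L0: "br x x = 0" for x using lie by (simp add: lie_algebra_def)
  have asym: "br x y = - br y x" for x y
  proof -
    have "br (x + y) (x + y) = 0" by (rule L0)
    hence "br x (x + y) + br y (x + y) = 0" using linear_add[OF L2[of "x+y"], of x y] by simp
    hence "br x x + br x y + (br y x + br y y) = 0"
      using linear_add[OF L1[of x], of x y] linear_add[OF L1[of y], of x y] by simp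
    thus ?thesis using L0 by (simp add: add_eq_0_iff)
  qed
  have sZ: "subspace Z" by (simp add: Z_def derived_algebra_def bracket_span_def)
  have dZ: "dim Z = 2" using assms(2) by (simp add: Z_def)
  have cen: "br z x = 0" "br x z = 0" if "z \<in> Z" for z x
    using assms(3) that asym[of x z] by (auto simp: Z_def lie_centre_def)
  obtain B where B: "B \<subseteq> Z" "independent B" "Z \<subseteq> span B" "card B = dim Z"
    by (rule basis_exists[of Z])
  then obtain z1 z2 where z12: "B = {z1, z2}" "z1 \<noteq> z2" using dZ by (metis card_2_iff)
  have zZ: "z1 \<in> Z" "z2 \<in> Z" using B(1) z12 by auto
  have comb_ne: "a *\<^sub>R z1 + b *\<^sub>R z2 \<noteq> 0" if "a \<noteq> 0 \<or> b \<noteq> 0" for a b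
  proof
    assume h: "a *\<^sub>R z1 + b *\<^sub>R z2 = 0"
    show False
    proof (cases "a = 0")
      case False
      have "z1 = (- b / a) *\<^sub>R z2"
      proof -
        have "a *\<^sub>R z1 = (- b) *\<^sub>R z2" using h by (simp add: add_eq_0_iff)
        hence "inverse a *\<^sub>R (a *\<^sub>R z1) = inverse a *\<^sub>R ((- b) *\<^sub>R z2)" by simp
        thus ?thesis using False by (simp add: divide_inverse mult.commute)
      qed
      moreover have "(- b / a) *\<^sub>R z2 \<in> span {z2}" by (rule span_scale[OF span_base]) simp
      moreover have "B - {z1} = {z2}" using z12 by auto
      ultimately have "z1 \<in> span (B - {z1})" by simp
      hence "dependent B" using z12 unfolding dependent_def by blast
      thus False using B(2) by simp
    next
      case True
      hence "b \<noteq> 0" "b *\<^sub>R z2 = 0" using that h by auto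
      hence "z2 = 0" by simp
      hence "dependent B" using z12 by (simp add: dependent_zero)
      thus False using B(2) by simp
    qed
  qed
  define w1 where "w1 x y = z1 \<bullet> br x y" for x y
  define w2 where "w2 x y = z2 \<bullet> br x y" for x y
  have bw1: "bil w1" unfolding bil_def w1_def using lin_comp_inner L1 L2 by blast
  have bw2: "bil w2" unfolding bil_def w2_def using lin_comp_inner L1 L2 by blast
  define W where "W = {y. \<forall>x\<in>Z. orthogonal x y}"
  have sW: "subspace W" unfolding W_def by (auto simp: subspace_def orthogonal_clauses)
  have dW: "dim W + 2 = CARD('n)"
    using dim_subspace_orthogonal_to_vectors[OF sZ subspace_UNIV] dZ by (simp add: W_def)
  have ndg: "nondeg (\<lambda>x y. a * w1 x y + b * w2 x y) W" if ab: "a \<noteq> 0 \<or> b \<noteq> 0" for a b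
  proof -
    define c where "c = a *\<^sub>R z1 + b *\<^sub>R z2"
    have cZ: "c \<in> Z" unfolding c_def using sZ zZ by (intro subspace_add subspace_scale)
    have c0: "c \<noteq> 0" using comb_ne[OF ab] by (simp add: c_def)
    have eqw: "a * w1 x y + b * w2 x y = c \<bullet> br x y" for x y
      by (simp add: w1_def w2_def c_def inner_add_left)
    define F where "F v = c \<bullet> v" for v
    have lF: "linear F" unfolding F_def by (rule linearI) (simp_all add: inner_add_right)
    have "F c \<noteq> 0" using c0 by (simp add: F_def)
    hence "coadj_orbit_dim br F = CARD('n) - 2"
      using assms(1) lF cZ unfolding MD_algebra_def Z_def by blast
    define M where "M = (\<chi> i j. F (br (axis i 1) (axis j 1)) :: real^'n^'n)"
    have rM: "rank M = CARD('n) - 2"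
      using \<open>coadj_orbit_dim br F = CARD('n) - 2\<close> by (simp add: coadj_orbit_dim_def M_def)
    have lFb: "linear (\<lambda>y. F (br x y))" for x unfolding F_def by (rule lin_comp_inner[OF L1])
    have lFb2: "linear (\<lambda>x. F (br x y))" for y unfolding F_def by (rule lin_comp_inner[OF L2])
    have Mv: "(M *v y) $ i = F (br (axis i 1) y)" for y i
    proof -
      have "F (br (axis i 1) y) = F (br (axis i 1) (\<Sum>j\<in>UNIV. (y $ j) *\<^sub>R axis j 1))"
        using basis_expansion[of y] by (simp add: scalar_mult_eq_scaleR)
      also have "\<dots> = (\<Sum>j\<in>UNIV. (y $ j) * F (br (axis i 1) (axis j 1)))"
        using linear_sum[OF lFb[of "axis i 1"], of "\<lambda>j. (y $ j) *\<^sub>R axis j 1" UNIV]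
          linear_scale[OF lFb[of "axis i 1"]] by simp
      finally show ?thesis by (simp add: matrix_vector_mult_def M_def mult.commute)
    qed
    define K where "K = {y. M *v y = 0}"
    have sK: "subspace K" unfolding K_def
      by (auto simp: subspace_def matrix_vector_right_distrib matrix_vector_mult_scaleR)
    have "dim (UNIV \<inter> {y. M *v y = 0}) + dim (range ((*v) M)) = dim (UNIV :: (real^'n) set)"
      by (rule rank_nullity_sub) (simp_all add: matrix_vector_mul_linear)
    hence dK: "dim K + (CARD('n) - 2) = CARD('n)" using rM by (simp add: K_def rank_dim_range)
    have ZK: "Z \<subseteq> K"
    proof
      fix z assume "z \<in> Z"
      hence "(M *v z) $ i = 0" for i using Mv cen by (simp add: F_def)
      thus "z \<in> K" by (simp add: K_def vec_eq_iff)
    qed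
    have dK2: "dim K \<le> dim Z" using dK dZ dW by simp
    have KZ: "Z = K" by (rule subspace_dim_equal[OF sZ sK ZK dK2])
    show ?thesis unfolding nondeg_def
    proof (intro ballI impI)
      fix u assume uW: "u \<in> W" and H: "\<forall>v\<in>W. a * w1 u v + b * w2 u v = 0"
      have all: "F (br u v) = 0" for v
      proof -
        obtain z w where zw: "z \<in> span Z" "\<And>t. t \<in> span Z \<Longrightarrow> orthogonal w t" "v = z + w"
          using orthogonal_subspace_decomp_exists[of Z v] by metis
        have zZ': "z \<in> Z" using zw(1) sZ by (metis span_eq_iff)
        have wW: "w \<in> W" unfolding W_def
          using zw(2) span_base orthogonal_commute by blast
        have "F (br u v) = F (br u z) + F (br u w)"
          using zw(3) linear_add[OF lFb[of u], of z w] by simp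
        also have "F (br u z) = 0" using cen(2)[OF zZ'] by (simp add: F_def)
        also have "F (br u w) = 0" using H wW eqw by (simp add: F_def)
        finally show ?thesis by simp
      qed
      have "(M *v u) $ i = 0" for i using Mv[of u i] all[of "axis i 1"] asym[of "axis i 1" u] lF
        by (simp add: linear_neg)
      hence "u \<in> K" by (simp add: K_def vec_eq_iff)
      hence "u \<in> Z" using KZ by simp
      hence "orthogonal u u" using uW by (simp add: W_def)
      thus "u = 0" by (simp add: orthogonal_def)
    qed
  qed
  have "good W w1 w2" unfolding good_def
    using sW bw1 bw2 ndg by (simp add: w1_def w2_def L0)
  hence "4 dvd dim W" by (rule good_dvd)
  thus ?thesis using dW by (metis add_diff_cancel_right')
qed

end
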